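(* For every positive integer $n$ and every pseudo-composition $\alpha$ of $n$, the type $B$ ribbon number $r^B_\alpha$ is odd; equivalently $c^B_{2,0}(n)=0$ and $c^B_{2,1}(n)=2^n$.
   Context: A signed permutation of $[n]$ is a bijection $w$ of $\{\pm1,\ldots,\pm n\}$ with $w(-i)=-w(i)$; these form $\mathfrak{S}^B_n$. With $w(0):=0$, $D(w)=\{i\in\{0,\ldots,n-1\}: w(i)>w(i+1)\}$. A pseudo-composition of $n$ ($\alpha\models_0 n$) is a sequence $(\alpha_1,\ldots,\alpha_\ell)$ of integers with $\alpha_1\ge0$, $\alpha_2,\ldots,\alpha_\ell>0$ and sum $n$, with $D(\alpha)=\{\alpha_1,\alpha_1+\alpha_2,\ldots,\alpha_1+\cdots+\alpha_{\ell-1}\}$. Then $r^B_\alpha=|\{w\in\mathfrak{S}^B_n: D(w)=D(\alpha)\}|$ and $c^B_{p,i}(n)=|\{\alpha\models_0 n: r^B_\alpha\equiv i\pmod p\}|$. There are $2^n$ pseudo-compositions of $n$. *)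

theory Defs
  imports Main
begin

text \<open>Signed permutations of [n], represented as functions on int that are bijections of
  {-n..n} (hence of the pm-set, since oddness forces w 0 = 0), odd, and the identity
  outside {-n..n} (extensionality, so that the set is finite).\<close>
definition signed_perms :: "nat \<Rightarrow> (int \<Rightarrow> int) set" where
  "signed_perms n = {w. bij_betw w {- int n..int n} {- int n..int n}
                        \<and> (\<forall>i. w (- i) = - w i)
                        \<and> (\<forall>x. x \<notin> {- int n..int n} \<longrightarrow> w x = x)}"

definition descent_set :: "nat \<Rightarrow> (int \<Rightarrow> int) \<Rightarrow> nat set" where
  "descent_set n w = {i. i < n \<and> w (int i) > w (int i + 1)}"

definition pseudo_comps :: "nat \<Rightarrow> nat list set" where
  "pseudo_comps n = {\<alpha>. \<alpha> \<noteq> [] \<and> (\<forall>a\<in>set (tl \<alpha>). a > 0) \<and> sum_list \<alpha> = n}"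

definition comp_descent :: "nat list \<Rightarrow> nat set" where
  "comp_descent \<alpha> = {sum_list (take k \<alpha>) | k. 1 \<le> k \<and> k < length \<alpha>}"

definition ribbonB :: "nat \<Rightarrow> nat list \<Rightarrow> nat" where
  "ribbonB n \<alpha> = card {w \<in> signed_perms n. descent_set n w = comp_descent \<alpha>}"

definition cB :: "nat \<Rightarrow> nat \<Rightarrow> nat \<Rightarrow> nat" where
  "cB p i n = card {\<alpha> \<in> pseudo_comps n. ribbonB n \<alpha> mod p = i mod p}"

end

theory Submission
  imports Defs
begin

definition RB :: "nat \<Rightarrow> nat set \<Rightarrow> (int \<Rightarrow> int) set" where
  "RB n S = {w \<in> signed_perms n. descent_set n w = S}"


lemma sp_D: "w \<in> signed_perms n \<Longrightarrow> bij_betw w {- int n..int n} {- int n..int n}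
                        \<and> (\<forall>i. w (- i) = - w i)
                        \<and> (\<forall>x. x \<notin> {- int n..int n} \<longrightarrow> w x = x)"
  unfolding signed_perms_def mem_Collect_eq .

lemma sp_odd: "w \<in> signed_perms n \<Longrightarrow> w (- x) = - w x"
  using sp_D by blast

lemma sp_zero: "w \<in> signed_perms n \<Longrightarrow> w 0 = 0"
  using sp_odd[of w n 0] by simp

lemma sp_out: "w \<in> signed_perms n \<Longrightarrow> x \<notin> {- int n..int n} \<Longrightarrow> w x = x"
  using sp_D by blast

lemma sp_range: "w \<in> signed_perms n \<Longrightarrow> x \<in> {- int n..int n} \<Longrightarrow> w x \<in> {- int n..int n}"
proof -
  assume "w \<in> signed_perms n" "x \<in> {- int n..int n}"
  then have "bij_betw w {- int n..int n} {- int n..int n}" using sp_D by blast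
  then show ?thesis using \<open>x \<in> _\<close> bij_betwE by blast
qed

lemma sp_inj: "w \<in> signed_perms n \<Longrightarrow> x \<in> {- int n..int n} \<Longrightarrow> y \<in> {- int n..int n} \<Longrightarrow> w x = w y \<Longrightarrow> x = y"
proof -
  assume a: "w \<in> signed_perms n" "x \<in> {- int n..int n}" "y \<in> {- int n..int n}" "w x = w y"
  then have "bij_betw w {- int n..int n} {- int n..int n}" using sp_D by blast
  then have "inj_on w {- int n..int n}" by (rule bij_betw_imp_inj_on)
  then show ?thesis by (rule inj_onD[OF _ a(4) a(2) a(3)])
qed

lemma sp_inj_all: "w \<in> signed_perms n \<Longrightarrow> w x = w y \<Longrightarrow> x = y"
proof -
  assume w: "w \<in> signed_perms n" and e: "w x = w y"
  show "x = y"
  proof (cases "x \<in> {- int n..int n}"; cases "y \<in> {- int n..int n}")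
    assume "x \<in> {- int n..int n}" "y \<in> {- int n..int n}" then show ?thesis using sp_inj[OF w] e by blast
  next
    assume "x \<in> {- int n..int n}" "y \<notin> {- int n..int n}" then show ?thesis using sp_range[OF w, of x] sp_out[OF w, of y] e by simp
  next
    assume "x \<notin> {- int n..int n}" "y \<in> {- int n..int n}" then show ?thesis using sp_range[OF w, of y] sp_out[OF w, of x] e by simp
  next
    assume "x \<notin> {- int n..int n}" "y \<notin> {- int n..int n}" then show ?thesis using sp_out[OF w, of y] sp_out[OF w, of x] e by simp
  qed
qed

lemma sp_abs: "w \<in> signed_perms n \<Longrightarrow> 0 \<le> a \<Longrightarrow> 0 \<le> b \<Longrightarrow> \<bar>w a\<bar> = \<bar>w b\<bar> \<Longrightarrow> a = b"
proof -
  assume w: "w \<in> signed_perms n" and a: "0 \<le> a" and b: "0 \<le> b" and e: "\<bar>w a\<bar> = \<bar>w b\<bar>"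
  then have "w a = w b \<or> w a = w (- b)" using sp_odd[OF w] by arith
  then have "a = b \<or> a = - b" using sp_inj_all[OF w] by blast
  then show "a = b" using a b by linarith
qed

lemma sp_finite: "finite (signed_perms n)"
proof -
  let ?A = "{- int n..int n}"
  let ?h = "\<lambda>w::int\<Rightarrow>int. (\<lambda>x. if x \<in> ?A then w x else 0)"
  have "?h ` signed_perms n \<subseteq> {f. \<forall>x. (x \<in> ?A \<longrightarrow> f x \<in> ?A) \<and> (x \<notin> ?A \<longrightarrow> f x = 0)}"
  proof
    fix f assume "f \<in> ?h ` signed_perms n"
    then obtain w where w: "w \<in> signed_perms n" and f: "f = ?h w" by blast
    show "f \<in> {f. \<forall>x. (x \<in> ?A \<longrightarrow> f x \<in> ?A) \<and> (x \<notin> ?A \<longrightarrow> f x = 0)}"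
      unfolding f using sp_range[OF w] by simp
  qed
  moreover have "finite {f. \<forall>x. (x \<in> ?A \<longrightarrow> f x \<in> ?A) \<and> (x \<notin> ?A \<longrightarrow> f x = (0::int))}"
    by (rule finite_set_of_finite_funs) auto
  moreover have "inj_on ?h (signed_perms n)"
  proof (rule inj_onI)
    fix v w assume v: "v \<in> signed_perms n" and w: "w \<in> signed_perms n" and e: "?h v = ?h w"
    show "v = w"
    proof
      fix x show "v x = w x"
        using fun_cong[OF e, of x] sp_out[OF v, of x] sp_out[OF w, of x] by (auto split: if_splits)
    qed
  qed
  ultimately have "finite (?h ` signed_perms n)" using finite_subset by blast
  then show ?thesis using \<open>inj_on ?h _\<close> by (rule finite_imageD)
qed

lemma RB_empty: "RB n {} = {id}"
proof
  have "id \<in> signed_perms n" unfolding signed_perms_def by (simp add: bij_betw_id)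
  moreover have "descent_set n id = {}" by (simp add: descent_set_def)
  ultimately show "{id} \<subseteq> RB n {}" by (simp add: RB_def)
  show "RB n {} \<subseteq> {id}"
  proof
    fix w assume "w \<in> RB n {}"
    then have w: "w \<in> signed_perms n" and d: "descent_set n w = {}" by (auto simp: RB_def)
    have inc: "w (int i) < w (int i + 1)" if "i < n" for i
    proof -
      have "\<not> w (int i) > w (int i + 1)" using d that by (auto simp: descent_set_def)
      moreover have "w (int i) \<noteq> w (int i + 1)" using sp_inj_all[OF w] by force
      ultimately show ?thesis by simp
    qed
    have lo: "i \<le> n \<Longrightarrow> w (int i) \<ge> int i" for i
    proof (induction i)
      case 0 then show ?case using sp_zero[OF w] by simp
    next
      case (Suc i)
      then have "w (int i) < w (int i + 1)" using inc[of i] by simp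
      then show ?case using Suc by (simp add: add.commute)
    qed
    have hi: "j \<le> n \<Longrightarrow> w (int (n - j)) \<le> int (n - j)" for j
    proof (induction j)
      case 0 then show ?case using sp_range[OF w, of "int n"] by simp
    next
      case (Suc j)
      then have "w (int (n - Suc j)) < w (int (n - Suc j) + 1)" using inc[of "n - Suc j"] by simp
      moreover have "int (n - Suc j) + 1 = int (n - j)" using Suc by simp
      ultimately show ?case using Suc by simp
    qed
    have pos: "w x = x" if "0 \<le> x" "x \<le> int n" for x
    proof -
      define i where "i = nat x"
      have i: "x = int i" "i \<le> n" using that unfolding i_def by auto
      have "w (int (n - (n - i))) \<le> int (n - (n - i))" using hi[of "n - i"] by simp
      then show ?thesis using lo[OF i(2)] i by simp
    qed
    have "w x = x" for x
    proof (cases "x \<in> {- int n..int n}")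
      case True
      show ?thesis
      proof (cases "x \<ge> 0")
        case True then show ?thesis using pos \<open>x \<in> _\<close> by simp
      next
        case False then show ?thesis using pos[of "-x"] sp_odd[OF w, of "-x"] \<open>x \<in> _\<close> by simp
      qed
    qed (use sp_out[OF w] in simp)
    then show "w \<in> {id}" by auto
  qed
qed


lemma even_inv:
  assumes "finite A" "\<forall>x\<in>A. g x \<in> A \<and> g (g x) = x \<and> g x \<noteq> x"
  shows "even (card A)"
  using assms
proof (induction "card A" arbitrary: A rule: less_induct)
  case less
  show ?case
  proof (cases "A = {}")
    case True then show ?thesis by simp
  next
    case False
    then obtain x where x: "x \<in> A" by blast
    define B where "B = A - {x, g x}"
    have gx: "g x \<in> A" "g x \<noteq> x" using less.prems x by auto
    have cA: "card A = card B + 2"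
    proof -
      have "{x, g x} \<subseteq> A" using x gx by auto
      then have "card B = card A - card {x, g x}" unfolding B_def using less.prems(1) by (simp add: card_Diff_subset finite_subset)
      moreover have "card {x, g x} = 2" using gx by simp
      moreover have "card {x, g x} \<le> card A" using \<open>{x, g x} \<subseteq> A\<close> less.prems(1) by (rule card_mono[rotated])
      ultimately show ?thesis by simp
    qed
    have "finite B" unfolding B_def using less.prems(1) by simp
    moreover have "\<forall>y\<in>B. g y \<in> B \<and> g (g y) = y \<and> g y \<noteq> y"
    proof
      fix y assume y: "y \<in> B"
      then have yA: "y \<in> A" "y \<noteq> x" "y \<noteq> g x" unfolding B_def by auto
      then have "g y \<in> A" "g (g y) = y" "g y \<noteq> y" using less.prems(2) by auto
      moreover have "g y \<noteq> x" using yA \<open>g (g y) = y\<close> by metis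
      moreover have "g y \<noteq> g x" using yA \<open>g (g y) = y\<close> less.prems(2) x by metis
      ultimately show "g y \<in> B \<and> g (g y) = y \<and> g y \<noteq> y" unfolding B_def by auto
    qed
    moreover have "card B < card A" using cA by simp
    ultimately have "even (card B)" using less.hyps by blast
    then show ?thesis using cA by simp
  qed
qed

definition flip :: "int \<Rightarrow> (int \<Rightarrow> int) \<Rightarrow> int \<Rightarrow> int" where
  "flip p w = (\<lambda>x. if x = p \<or> x = - p then - w x else w x)"

lemma flip_abs[simp]: "\<bar>flip p w x\<bar> = \<bar>w x\<bar>"
  by (simp add: flip_def)

lemma flip_flip: "flip p (flip p w) = w"
  by (rule ext) (simp add: flip_def)

lemma flip_sp:
  assumes w: "w \<in> signed_perms n" and p: "p \<in> {- int n..int n}"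
  shows "flip p w \<in> signed_perms n"
proof -
  let ?A = "{- int n..int n}"
  define \<sigma> where "\<sigma> = (\<lambda>x::int. if x = p then - p else if x = - p then p else x)"
  have eq: "flip p w = w \<circ> \<sigma>"
  proof
    fix x show "flip p w x = (w \<circ> \<sigma>) x"
      using sp_odd[OF w, of p] sp_odd[OF w, of "-p"] by (auto simp: flip_def \<sigma>_def)
  qed
  have s: "bij_betw \<sigma> ?A ?A"
    by (rule bij_betw_byWitness[where f' = \<sigma>]) (use p in \<open>auto simp: \<sigma>_def\<close>)
  have "bij_betw w ?A ?A" using sp_D[OF w] by blast
  then have b: "bij_betw (flip p w) ?A ?A" unfolding eq using s by (blast intro: bij_betw_trans)
  have o: "\<forall>i. flip p w (- i) = - flip p w i" using sp_odd[OF w] by (auto simp: flip_def)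
  have e: "\<forall>x. x \<notin> ?A \<longrightarrow> flip p w x = x" using sp_out[OF w] p by (auto simp: flip_def)
  show ?thesis unfolding signed_perms_def using b o e by blast
qed

definition pos :: "nat \<Rightarrow> nat \<Rightarrow> (int \<Rightarrow> int) \<Rightarrow> int" where
  "pos t n w = (SOME p. p \<in> {int t + 1..int n} \<and> \<bar>w p\<bar> = Min ((\<lambda>q. \<bar>w q\<bar>) ` {int t + 1..int n}))"

lemma pos_flip: "pos t n (flip p w) = pos t n w"
  unfolding pos_def by simp

lemma pos_prop:
  assumes "t < n"
  shows "pos t n w \<in> {int t + 1..int n} \<and> (\<forall>q \<in> {int t + 1..int n}. \<bar>w (pos t n w)\<bar> \<le> \<bar>w q\<bar>)"
proof -
  let ?I = "{int t + 1..int n}"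
  have ne: "(\<lambda>q. \<bar>w q\<bar>) ` ?I \<noteq> {}" using assms by auto
  have "Min ((\<lambda>q. \<bar>w q\<bar>) ` ?I) \<in> (\<lambda>q. \<bar>w q\<bar>) ` ?I" using ne by (intro Min_in) auto
  then have ex: "\<exists>p. p \<in> ?I \<and> \<bar>w p\<bar> = Min ((\<lambda>q. \<bar>w q\<bar>) ` ?I)" by auto
  have P: "pos t n w \<in> ?I \<and> \<bar>w (pos t n w)\<bar> = Min ((\<lambda>q. \<bar>w q\<bar>) ` ?I)"
    unfolding pos_def by (rule someI_ex[OF ex])
  have "\<forall>q \<in> ?I. Min ((\<lambda>q. \<bar>w q\<bar>) ` ?I) \<le> \<bar>w q\<bar>" by (intro ballI Min_le) auto
  then show ?thesis using P by simp
qed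


lemma flip_desc:
  assumes w: "w \<in> signed_perms n" and tn: "t < n"
    and inc: "\<And>i. t < i \<Longrightarrow> i < n \<Longrightarrow> w (int i) < w (int i + 1)"
    and i: "i < n" "i \<noteq> t"
  shows "(flip (pos t n w) w (int i + 1) < flip (pos t n w) w (int i)) \<longleftrightarrow> (w (int i + 1) < w (int i))"
proof -
  define p where "p = pos t n w"
  have p: "p \<in> {int t + 1..int n}" and pmin: "\<And>q. q \<in> {int t + 1..int n} \<Longrightarrow> \<bar>w p\<bar> \<le> \<bar>w q\<bar>"
    using pos_prop[OF tn, of w] unfolding p_def by auto
  have strict: "\<bar>w p\<bar> < \<bar>w q\<bar>" if "q \<in> {int t + 1..int n}" "q \<noteq> p" for q
  proof -
    have "\<bar>w p\<bar> \<noteq> \<bar>w q\<bar>" using sp_abs[OF w, of p q] that p by auto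
    then show ?thesis using pmin[OF that(1)] by simp
  qed
  show ?thesis
  proof (cases "i < t")
    case True
    then have "int i \<noteq> p" "int i \<noteq> -p" "int i + 1 \<noteq> p" "int i + 1 \<noteq> -p" using p by auto
    then show ?thesis unfolding p_def[symmetric] by (simp add: flip_def)
  next
    case False
    then have ti: "t < i" using i by simp
    have wi: "w (int i) < w (int i + 1)" using inc[OF ti i(1)] .
    have "\<not> flip p w (int i + 1) < flip p w (int i)"
    proof (cases "int i + 1 = p")
      case True
      have "\<bar>w p\<bar> < \<bar>w (int i)\<bar>" if "int i \<noteq> int t" using strict[of "int i"] True ti that i by simp
      moreover have "int i \<noteq> int t" using ti by simp
      ultimately have "\<bar>w p\<bar> < \<bar>w (int i)\<bar>" by blast
      moreover have "w (int i) < w p" using wi True by simp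
      ultimately have "w (int i) < - w p" by arith
      moreover have "flip p w (int i + 1) = - w p" "flip p w (int i) = w (int i)" using True p by (auto simp: flip_def)
      ultimately show ?thesis by simp
    next
      case F1: False
      show ?thesis
      proof (cases "int i = p")
        case True
        have "\<bar>w p\<bar> < \<bar>w (int i + 1)\<bar>" using strict[of "int i + 1"] True ti i by simp
        moreover have "w p < w (int i + 1)" using wi True by simp
        ultimately have "- w p < w (int i + 1)" by arith
        moreover have "flip p w (int i + 1) = w (int i + 1)" "flip p w (int i) = - w p" using True p by (auto simp: flip_def)
        ultimately show ?thesis by simp
      next
        case False
        then have "flip p w (int i + 1) = w (int i + 1)" "flip p w (int i) = w (int i)" using F1 p by (auto simp: flip_def)
        then show ?thesis using wi by simp
      qed
    qed
    then show ?thesis using wi unfolding p_def by simp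
  qed
qed

lemma minus_eq_iff: "t \<in> S \<Longrightarrow> (D - {t} = S - {t}) = (D = S \<or> D = S - {t})"
  by auto

lemma RB_step:
  assumes S: "S \<subseteq> {..<n}" "S \<noteq> {}"
  shows "even (card (RB n S) + card (RB n (S - {Max S})))"
proof -
  define t where "t = Max S"
  have fS: "finite S" using S(1) finite_subset by blast
  have tS: "t \<in> S" unfolding t_def using fS S(2) by (rule Max_in)
  then have tn: "t < n" using S(1) by auto
  define W where "W = {w \<in> signed_perms n. descent_set n w - {t} = S - {t}}"
  have WU: "W = RB n S \<union> RB n (S - {t})" unfolding W_def RB_def minus_eq_iff[OF tS] by auto
  have fin: "finite (RB n X)" for X unfolding RB_def using sp_finite by simp
  have disj: "RB n S \<inter> RB n (S - {t}) = {}" unfolding RB_def using tS by auto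
  have cW: "card W = card (RB n S) + card (RB n (S - {t}))"
    unfolding WU using fin disj by (simp add: card_Un_disjoint)
  have inc: "w (int i) < w (int i + 1)" if w: "w \<in> W" and ti: "t < i" and "i < n" for w i
  proof -
    have "i \<notin> S"
    proof
      assume "i \<in> S" then have "i \<le> t" unfolding t_def using fS by simp
      with ti show False by simp
    qed
    then have "i \<notin> descent_set n w" using w ti unfolding W_def by blast
    then have "\<not> w (int i + 1) < w (int i)" using \<open>i < n\<close> by (simp add: descent_set_def)
    moreover have "w (int i) \<noteq> w (int i + 1)" using w unfolding W_def using sp_inj_all[of w n "int i" "int i + 1"] by auto
    ultimately show ?thesis by simp
  qed
  define g where "g = (\<lambda>w. flip (pos t n w) w)"
  have "\<forall>w\<in>W. g w \<in> W \<and> g (g w) = w \<and> g w \<noteq> w"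
  proof
    fix w assume wW: "w \<in> W"
    then have w: "w \<in> signed_perms n" unfolding W_def by blast
    have p: "pos t n w \<in> {int t + 1..int n}" using pos_prop[OF tn] by blast
    have gsp: "g w \<in> signed_perms n" unfolding g_def by (rule flip_sp[OF w]) (use p in auto)
    have "descent_set n (g w) - {t} = descent_set n w - {t}"
      unfolding descent_set_def g_def using flip_desc[OF w tn inc[OF wW]] by auto
    then have "g w \<in> W" using gsp wW unfolding W_def by simp
    moreover have "g (g w) = w" unfolding g_def pos_flip flip_flip ..
    moreover have "g w \<noteq> w"
    proof
      assume "g w = w"
      then have "g w (pos t n w) = w (pos t n w)" by simp
      then have "- w (pos t n w) = w (pos t n w)" unfolding g_def flip_def by simp
      then have "w (pos t n w) = w 0" using sp_zero[OF w] by simp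
      then have "pos t n w = 0" using sp_inj_all[OF w] by blast
      then show False using p by simp
    qed
    ultimately show "g w \<in> W \<and> g (g w) = w \<and> g w \<noteq> w" by blast
  qed
  then have "even (card W)" using even_inv[of W g] fin unfolding WU by simp
  then show ?thesis using cW unfolding t_def by simp
qed

lemma RB_odd: "S \<subseteq> {..<n} \<Longrightarrow> odd (card (RB n S))"
proof (induction "card S" arbitrary: S)
  case 0
  have "finite S" using 0(2) finite_subset by blast
  then have "S = {}" using 0(1) by simp
  then show ?case using RB_empty by simp
next
  case (Suc k)
  have fS: "finite S" using Suc.prems finite_subset by blast
  then have ne: "S \<noteq> {}" using Suc.hyps(2) by auto
  have "Max S \<in> S" using fS ne by (rule Max_in)
  then have "card (S - {Max S}) = k" using Suc.hyps(2) fS by simp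
  moreover have "S - {Max S} \<subseteq> {..<n}" using Suc.prems by auto
  ultimately have "odd (card (RB n (S - {Max S})))" by (intro Suc.hyps(1)) simp_all
  then show ?case using RB_step[OF Suc.prems ne] by simp
qed


lemma comp_descent_sub:
  assumes "\<alpha> \<in> pseudo_comps n"
  shows "comp_descent \<alpha> \<subseteq> {..<n}"
proof
  fix x assume "x \<in> comp_descent \<alpha>"
  then obtain k where k: "x = sum_list (take k \<alpha>)" "1 \<le> k" "k < length \<alpha>"
    unfolding comp_descent_def by blast
  have tl: "\<forall>a\<in>set (tl \<alpha>). a > 0" and sn: "sum_list \<alpha> = n" using assms unfolding pseudo_comps_def by auto
  have "\<alpha> ! k = tl \<alpha> ! (k - 1)" using k by (cases \<alpha>) auto
  moreover have "k - 1 < length (tl \<alpha>)" using k by simp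
  ultimately have pos: "\<alpha> ! k > 0" using tl nth_mem by metis
  have "drop k \<alpha> = \<alpha> ! k # drop (Suc k) \<alpha>" using k by (simp add: Cons_nth_drop_Suc)
  then have "\<alpha> ! k \<in> set (drop k \<alpha>)" by simp
  then have "\<alpha> ! k \<le> sum_list (drop k \<alpha>)" by (intro member_le_sum_list) auto
  moreover have "sum_list \<alpha> = sum_list (take k \<alpha>) + sum_list (drop k \<alpha>)"
    by (metis append_take_drop_id sum_list_append)
  ultimately show "x \<in> {..<n}" using pos k sn by simp
qed

lemma pc_snoc: "(\<beta> @ [x] \<in> pseudo_comps n) \<longleftrightarrow>
   ((\<beta> = [] \<and> x = n) \<or> (\<beta> \<noteq> [] \<and> (\<forall>a\<in>set (tl \<beta>). a > 0) \<and> x > 0 \<and> sum_list \<beta> + x = n))"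
  by (cases \<beta>) (auto simp: pseudo_comps_def)

definition ext_pc :: "nat list \<times> bool \<Rightarrow> nat list" where
  "ext_pc = (\<lambda>(\<alpha>, b). if b then \<alpha> @ [1] else butlast \<alpha> @ [last \<alpha> + 1])"

lemma ext_pc_T: "ext_pc (\<alpha>, True) = \<alpha> @ [1]" by (simp add: ext_pc_def)
lemma ext_pc_F: "ext_pc (\<beta> @ [x], False) = \<beta> @ [x + 1]" by (simp add: ext_pc_def)

lemma pc_nonempty: "\<alpha> \<in> pseudo_comps n \<Longrightarrow> \<exists>\<beta> x. \<alpha> = \<beta> @ [x]"
  unfolding pseudo_comps_def by (metis (mono_tags, lifting) mem_Collect_eq rev_exhaust)

lemma ext_pc_inj: "inj_on ext_pc (pseudo_comps n \<times> UNIV)"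
proof (rule inj_onI)
  fix u v assume u: "u \<in> pseudo_comps n \<times> UNIV" and v: "v \<in> pseudo_comps n \<times> UNIV" and e: "ext_pc u = ext_pc v"
  obtain \<alpha> b where ub: "u = (\<alpha>, b)" by (cases u)
  obtain \<alpha>' b' where vb: "v = (\<alpha>', b')" by (cases v)
  obtain \<beta> x where a: "\<alpha> = \<beta> @ [x]" using pc_nonempty u ub by blast
  obtain \<beta>' x' where a': "\<alpha>' = \<beta>' @ [x']" using pc_nonempty v vb by blast
  have pa: "\<beta> @ [x] \<in> pseudo_comps n" using u ub a by simp
  have pa': "\<beta>' @ [x'] \<in> pseudo_comps n" using v vb a' by simp
  show "u = v"
  proof (cases b; cases b')
    assume "b" "b'" then show ?thesis using e ub vb by (simp add: ext_pc_T)
  next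
    assume "\<not> b" "\<not> b'" then show ?thesis using e ub vb a a' by (simp add: ext_pc_F)
  next
    assume "b" "\<not> b'"
    then have "\<beta> @ [x] @ [1] = \<beta>' @ [x' + 1]" using e ub vb a a' by (simp add: ext_pc_T ext_pc_F)
    then have "x' = 0" "\<beta>' = \<beta> @ [x]" by auto
    then show ?thesis using pa' pc_snoc[of \<beta>' x' n] by simp
  next
    assume "\<not> b" "b'"
    then have "\<beta>' @ [x'] @ [1] = \<beta> @ [x + 1]" using e ub vb a a' by (simp add: ext_pc_T ext_pc_F)
    then have "x = 0" "\<beta> = \<beta>' @ [x']" by auto
    then show ?thesis using pa pc_snoc[of \<beta> x n] by simp
  qed
qed

lemma ext_pc_image: "ext_pc ` (pseudo_comps n \<times> UNIV) = pseudo_comps (Suc n)"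
proof
  show "ext_pc ` (pseudo_comps n \<times> UNIV) \<subseteq> pseudo_comps (Suc n)"
  proof
    fix y assume "y \<in> ext_pc ` (pseudo_comps n \<times> UNIV)"
    then obtain \<alpha> b where ab: "\<alpha> \<in> pseudo_comps n" "y = ext_pc (\<alpha>, b)" by auto
    obtain \<beta> x where a: "\<alpha> = \<beta> @ [x]" using pc_nonempty ab(1) by blast
    have pa: "\<beta> @ [x] \<in> pseudo_comps n" using ab a by simp
    show "y \<in> pseudo_comps (Suc n)"
    proof (cases b)
      case True
      then have "y = (\<beta> @ [x]) @ [1]" using ab a by (simp add: ext_pc_T)
      moreover have "\<forall>a\<in>set (tl (\<beta> @ [x])). a > 0" using pa unfolding pc_snoc by (cases \<beta>) auto
      moreover have "sum_list (\<beta> @ [x]) = n" using pa unfolding pc_snoc by auto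
      ultimately show ?thesis using pc_snoc[of "\<beta> @ [x]" 1 "Suc n"] by simp
    next
      case False
      then have "y = \<beta> @ [x + 1]" using ab a by (simp add: ext_pc_F)
      then show ?thesis using pa pc_snoc[of \<beta> "x+1" "Suc n"] pc_snoc[of \<beta> x n] by auto
    qed
  qed
  show "pseudo_comps (Suc n) \<subseteq> ext_pc ` (pseudo_comps n \<times> UNIV)"
  proof
    fix y assume y: "y \<in> pseudo_comps (Suc n)"
    obtain \<beta> x where a: "y = \<beta> @ [x]" using pc_nonempty y by blast
    have py: "\<beta> @ [x] \<in> pseudo_comps (Suc n)" using y a by simp
    show "y \<in> ext_pc ` (pseudo_comps n \<times> UNIV)"
    proof (cases "\<beta> \<noteq> [] \<and> x = 1")
      case True
      then have "\<beta> \<in> pseudo_comps n" using py unfolding pc_snoc pseudo_comps_def by auto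
      moreover have "y = ext_pc (\<beta>, True)" using True a by (simp add: ext_pc_T)
      ultimately show ?thesis by blast
    next
      case False
      then have x: "x \<ge> 1" using py unfolding pc_snoc by auto
      then have "\<beta> @ [x - 1] \<in> pseudo_comps n" using py False unfolding pc_snoc by auto
      moreover have "y = ext_pc (\<beta> @ [x - 1], False)" using x a by (simp add: ext_pc_F)
      ultimately show ?thesis by blast
    qed
  qed
qed

lemma card_pc: "card (pseudo_comps n) = 2 ^ n"
proof (induction n)
  case 0
  have "pseudo_comps 0 = {[0]}"
  proof
    show "pseudo_comps 0 \<subseteq> {[0]}"
    proof
      fix a assume "a \<in> pseudo_comps 0"
      then obtain \<beta> x where "a = \<beta> @ [x]" "\<beta> @ [x] \<in> pseudo_comps 0" using pc_nonempty by blast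
      then show "a \<in> {[0]}" unfolding pc_snoc by auto
    qed
    show "{[0]} \<subseteq> pseudo_comps 0" by (simp add: pseudo_comps_def)
  qed
  then show ?case by simp
next
  case (Suc n)
  have "card (pseudo_comps (Suc n)) = card (pseudo_comps n \<times> (UNIV :: bool set))"
    unfolding ext_pc_image[symmetric] by (rule card_image[OF ext_pc_inj])
  also have "\<dots> = card (pseudo_comps n) * 2" by (simp add: card_cartesian_product)
  finally show ?case using Suc by simp
qed

theorem corollary4p2:
  fixes n :: nat
  assumes "n \<ge> 1"
  shows "(\<forall>\<alpha>\<in>pseudo_comps n. odd (ribbonB n \<alpha>)) \<and> cB 2 0 n = 0 \<and> cB 2 1 n = 2 ^ n"
proof -
  have od: "\<forall>\<alpha>\<in>pseudo_comps n. odd (ribbonB n \<alpha>)"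
  proof
    fix \<alpha> assume "\<alpha> \<in> pseudo_comps n"
    then have "odd (card (RB n (comp_descent \<alpha>)))" using comp_descent_sub RB_odd by blast
    then show "odd (ribbonB n \<alpha>)" unfolding ribbonB_def RB_def .
  qed
  have m1: "\<And>\<alpha>. \<alpha> \<in> pseudo_comps n \<Longrightarrow> ribbonB n \<alpha> mod 2 = 1" using od odd_iff_mod_2_eq_one by blast
  have "{\<alpha> \<in> pseudo_comps n. ribbonB n \<alpha> mod 2 = 0 mod 2} = {}" using m1 by auto
  then have c0: "cB 2 0 n = 0" unfolding cB_def by (simp only: card.empty)
  have "{\<alpha> \<in> pseudo_comps n. ribbonB n \<alpha> mod 2 = 1 mod 2} = pseudo_comps n" using m1 by auto
  then have c1: "cB 2 1 n = 2 ^ n" unfolding cB_def by (simp only: card_pc)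
  show ?thesis using od c0 c1 by blast
qed

end
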